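(* Let $\mathbb{F}\in\{\mathbb{R},\mathbb{C}\}$ and let $A$ be an $\ell\times\ell$ matrix over $\mathbb{F}$ whose minimal polynomial equals its characteristic polynomial. Then there is an $\ell\times\ell\times2$ tensor $T$ over $\mathbb{F}$ of rank at most $1$ such that $(E_\ell;A)-T$ is diagonalizable over $\mathbb{F}$. In particular $\mathrm{rank}_{\mathbb{F}}(E_\ell;A)\le \ell+1$.
   Context: For matrices $A,B$ of the same size $m\times n$, $(A;B)$ denotes the $m\times n\times 2$ tensor with slices $A,B$; tensors are added slicewise. A rank-one tensor over $\mathbb{F}$ has the form $(\alpha\,\mathbf{a}\mathbf{b}^T;\beta\,\mathbf{a}\mathbf{b}^T)$ with nonzero $\mathbf{a},\mathbf{b}$ and $(\alpha,\beta)\neq0$; $\mathrm{rank}_{\mathbb{F}}(T)$ is the minimal number of rank-one tensors summing to $T$. $E_\ell$ is the $\ell\times\ell$ identity. An $m\times n\times 2$ tensor $(A;B)$ is diagonalizable over $\mathbb{F}$ if there are nonsingular $P,Q$ over $\mathbb{F}$ and diagonal $D_A,D_B$ with $PAQ=(D_A,O)$, $PBQ=(D_B,O)$ if $m\le n$, and $PAQ=(D_A,O)^T$, $PBQ=(D_B,O)^T$ if $m>n$. *)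

theory Defs
  imports "Jordan_Normal_Form.Matrix" "Jordan_Normal_Form.Char_Poly"
begin

definition mat_poly_eval :: "'a::field poly \<Rightarrow> 'a mat \<Rightarrow> 'a mat" where
  "mat_poly_eval p A = mat (dim_row A) (dim_row A)
     (\<lambda>(i,j). \<Sum>k\<le>degree p. coeff p k * (A ^\<^sub>m k) $$ (i,j))"

definition is_minimal_poly :: "'a::field mat \<Rightarrow> 'a poly \<Rightarrow> bool" where
  "is_minimal_poly A p \<longleftrightarrow> lead_coeff p = 1 \<and> mat_poly_eval p A = 0\<^sub>m (dim_row A) (dim_row A)
     \<and> (\<forall>q. q \<noteq> 0 \<and> mat_poly_eval q A = 0\<^sub>m (dim_row A) (dim_row A) \<longrightarrow> degree p \<le> degree q)"

definition minimal_poly :: "'a::field mat \<Rightarrow> 'a poly" where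
  "minimal_poly A = (THE p. is_minimal_poly A p)"

(* m x n x 2 tensors (A;B) are represented as pairs of m x n matrices *)
type_synonym 'a tensor2 = "'a mat \<times> 'a mat"

definition tensor_carrier :: "nat \<Rightarrow> nat \<Rightarrow> 'a tensor2 set" where
  "tensor_carrier m n = carrier_mat m n \<times> carrier_mat m n"

definition tensor_add :: "'a::plus tensor2 \<Rightarrow> 'a tensor2 \<Rightarrow> 'a tensor2" where
  "tensor_add S T = (fst S + fst T, snd S + snd T)"

definition tensor_minus :: "'a::minus tensor2 \<Rightarrow> 'a tensor2 \<Rightarrow> 'a tensor2" where
  "tensor_minus S T = (fst S - fst T, snd S - snd T)"

definition tensor_zero :: "nat \<Rightarrow> nat \<Rightarrow> 'a::zero tensor2" where
  "tensor_zero m n = (0\<^sub>m m n, 0\<^sub>m m n)"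

definition tensor_sum :: "nat \<Rightarrow> nat \<Rightarrow> 'a::monoid_add tensor2 list \<Rightarrow> 'a tensor2" where
  "tensor_sum m n Ts = foldr tensor_add Ts (tensor_zero m n)"

definition rank_one_tensor :: "nat \<Rightarrow> nat \<Rightarrow> 'a::field tensor2 \<Rightarrow> bool" where
  "rank_one_tensor m n T \<longleftrightarrow> (\<exists>\<alpha> \<beta> a b. a \<in> carrier_vec m \<and> b \<in> carrier_vec n
      \<and> a \<noteq> 0\<^sub>v m \<and> b \<noteq> 0\<^sub>v n \<and> (\<alpha>, \<beta>) \<noteq> (0, 0)
      \<and> T = (\<alpha> \<cdot>\<^sub>m mat m n (\<lambda>(i,j). a $ i * b $ j), \<beta> \<cdot>\<^sub>m mat m n (\<lambda>(i,j). a $ i * b $ j)))"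

definition tensor_rank :: "nat \<Rightarrow> nat \<Rightarrow> 'a::field tensor2 \<Rightarrow> nat" where
  "tensor_rank m n T = (LEAST k. \<exists>Ts. length Ts = k \<and> (\<forall>S\<in>set Ts. rank_one_tensor m n S)
      \<and> tensor_sum m n Ts = T)"

(* diagonalizable: nonsingular P, Q with PAQ, PBQ of the form (D,O) resp. (D,O)^T with D diagonal;
   for an m x n matrix this means exactly that all entries off the main diagonal vanish,
   which is what diagonal_mat expresses for rectangular matrices *)
definition tensor_diagonalizable :: "nat \<Rightarrow> nat \<Rightarrow> 'a::field tensor2 \<Rightarrow> bool" where
  "tensor_diagonalizable m n T \<longleftrightarrow> (\<exists>P Q. P \<in> carrier_mat m m \<and> Q \<in> carrier_mat n n
      \<and> invertible_mat P \<and> invertible_mat Q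
      \<and> diagonal_mat (P * fst T * Q) \<and> diagonal_mat (P * snd T * Q))"

end

theory Submission imports Defs "HOL-Computational_Algebra.Field_as_Ring" begin

lemma mpe_dim[simp]: "dim_row (mat_poly_eval p A) = dim_row A" "dim_col (mat_poly_eval p A) = dim_row A"
  unfolding mat_poly_eval_def by auto

lemma mpe_carrier[simp]: "A \<in> carrier_mat n n \<Longrightarrow> mat_poly_eval p A \<in> carrier_mat n n"
  unfolding mat_poly_eval_def by auto

lemma mpe_index: assumes A: "A \<in> carrier_mat n n" and ij: "i < n" "j < n" and N: "degree p \<le> N"
  shows "mat_poly_eval p A $$ (i,j) = (\<Sum>k\<le>N. coeff p k * (A ^\<^sub>m k) $$ (i,j))"
proof -
  have "(\<Sum>k\<le>N. coeff p k * (A ^\<^sub>m k) $$ (i,j)) = (\<Sum>k\<le>degree p. coeff p k * (A ^\<^sub>m k) $$ (i,j))"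
    by (rule sum.mono_neutral_right) (use N in \<open>auto simp: coeff_eq_0\<close>)
  thus ?thesis using A ij unfolding mat_poly_eval_def by auto
qed

lemma mpe_zero: "A \<in> carrier_mat n n \<Longrightarrow> mat_poly_eval 0 A = 0\<^sub>m n n"
  by (rule eq_matI, auto simp: mpe_index[of A n _ _ 0 0])

lemma mpe_add: assumes A: "A \<in> carrier_mat n n"
  shows "mat_poly_eval (p + q) A = mat_poly_eval p A + mat_poly_eval q A"
proof (rule eq_matI)
  fix i j assume ij: "i < dim_row (mat_poly_eval p A + mat_poly_eval q A)"
     "j < dim_col (mat_poly_eval p A + mat_poly_eval q A)"
  let ?N = "max (degree p) (degree q)"
  have d: "degree (p+q) \<le> ?N" by (simp add: degree_add_le)
  from ij A have ij': "i < n" "j < n" by auto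
  show "mat_poly_eval (p + q) A $$ (i, j) = (mat_poly_eval p A + mat_poly_eval q A) $$ (i, j)"
    using ij' A by (simp add: mpe_index[OF A ij' d] mpe_index[OF A ij', of p ?N]
          mpe_index[OF A ij', of q ?N] sum.distrib algebra_simps)
qed (use A in auto)

lemma mpe_smult: assumes A: "A \<in> carrier_mat n n"
  shows "mat_poly_eval (Polynomial.smult a p) A = a \<cdot>\<^sub>m mat_poly_eval p A"
proof (rule eq_matI)
  fix i j assume ij: "i < dim_row (a \<cdot>\<^sub>m mat_poly_eval p A)" "j < dim_col (a \<cdot>\<^sub>m mat_poly_eval p A)"
  from ij A have ij': "i < n" "j < n" by auto
  have d: "degree (Polynomial.smult a p) \<le> degree p" by (simp add: degree_smult_le)
  show "mat_poly_eval (Polynomial.smult a p) A $$ (i, j) = (a \<cdot>\<^sub>m mat_poly_eval p A) $$ (i, j)"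
    using ij' A by (simp add: mpe_index[OF A ij' d] mpe_index[OF A ij', of p "degree p"]
         sum_distrib_left algebra_simps)
qed (use A in auto)

lemma mpe_minus: assumes A: "A \<in> carrier_mat n n"
  shows "mat_poly_eval (p - q) A = mat_poly_eval p A - mat_poly_eval q A"
proof (rule eq_matI)
  fix i j assume ij: "i < dim_row (mat_poly_eval p A - mat_poly_eval q A)"
     "j < dim_col (mat_poly_eval p A - mat_poly_eval q A)"
  let ?N = "max (degree p) (degree q)"
  have d: "degree (p-q) \<le> ?N" by (simp add: degree_diff_le)
  from ij A have ij': "i < n" "j < n" by auto
  show "mat_poly_eval (p - q) A $$ (i, j) = (mat_poly_eval p A - mat_poly_eval q A) $$ (i, j)"
    using ij' A by (simp add: mpe_index[OF A ij' d] mpe_index[OF A ij', of p ?N]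
          mpe_index[OF A ij', of q ?N] sum_subtractf algebra_simps)
qed (use A in auto)

lemma mpe_pCons: assumes A: "A \<in> carrier_mat n n"
  shows "mat_poly_eval (pCons a p) A = a \<cdot>\<^sub>m 1\<^sub>m n + mat_poly_eval p A * A"
proof (rule eq_matI)
  fix i j assume ij: "i < dim_row (a \<cdot>\<^sub>m 1\<^sub>m n + mat_poly_eval p A * A)"
    "j < dim_col (a \<cdot>\<^sub>m 1\<^sub>m n + mat_poly_eval p A * A)"
  from ij A have ij': "i < n" "j < n" by auto
  let ?d = "degree p"
  have d: "degree (pCons a p) \<le> Suc ?d" by simp
  have "mat_poly_eval (pCons a p) A $$ (i,j) = (\<Sum>k\<le>Suc ?d. coeff (pCons a p) k * (A ^\<^sub>m k) $$ (i,j))"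
    by (rule mpe_index[OF A ij' d])
  also have "\<dots> = a * (1\<^sub>m n) $$ (i,j) + (\<Sum>k\<le>?d. coeff p k * (A ^\<^sub>m Suc k) $$ (i,j))"
    by (subst sum.atMost_Suc_shift, use A in simp)
  also have "(\<Sum>k\<le>?d. coeff p k * (A ^\<^sub>m Suc k) $$ (i,j))
     = (\<Sum>k\<le>?d. coeff p k * (\<Sum>m<n. (A ^\<^sub>m k) $$ (i,m) * A $$ (m,j)))"
    using A ij' by (auto intro!: sum.cong simp: scalar_prod_def row_def col_def)
  also have "\<dots> = (\<Sum>m<n. (\<Sum>k\<le>?d. coeff p k * (A ^\<^sub>m k) $$ (i,m)) * A $$ (m,j))"
    by (simp add: sum_distrib_left sum_distrib_right sum.swap[of _ "{..<n}"] algebra_simps)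
  also have "\<dots> = (mat_poly_eval p A * A) $$ (i,j)"
    using A ij' by (auto intro!: sum.cong simp: scalar_prod_def mpe_index[OF A _ _ order.refl] atLeast0LessThan)
  finally show "mat_poly_eval (pCons a p) A $$ (i, j) = (a \<cdot>\<^sub>m 1\<^sub>m n + mat_poly_eval p A * A) $$ (i, j)"
    using A ij' by simp
qed (use A in auto)

lemma mpe_comm: assumes A: "A \<in> carrier_mat n n"
  shows "mat_poly_eval p A * A = A * mat_poly_eval p A"
proof (induct p rule: pCons_induct)
  case 0
  then show ?case using A by (simp add: mpe_zero)
next
  case (pCons a p)
  let ?E = "mat_poly_eval p A"
  have E: "?E \<in> carrier_mat n n" using A by simp
  have "(a \<cdot>\<^sub>m 1\<^sub>m n + ?E * A) * A = (a \<cdot>\<^sub>m 1\<^sub>m n) * A + ?E * A * A"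
    by (rule add_mult_distrib_mat) (use A E in auto)
  also have "(a \<cdot>\<^sub>m 1\<^sub>m n) * A = a \<cdot>\<^sub>m A" using A by (simp add: mult_smult_assoc_mat[of _ n n])
  also have "?E * A * A = A * ?E * A" using pCons(2) by simp
  also have "A * ?E * A = A * (?E * A)" by (rule assoc_mult_mat[OF A E A])
  also have "a \<cdot>\<^sub>m A + A * (?E * A) = A * (a \<cdot>\<^sub>m 1\<^sub>m n) + A * (?E * A)"
    using mult_smult_distrib[OF A one_carrier_mat[of n], of a] A by simp
  also have "\<dots> = A * (a \<cdot>\<^sub>m 1\<^sub>m n + ?E * A)"
    by (rule mult_add_distrib_mat[symmetric]) (use A E in auto)
  finally show ?case using A by (simp add: mpe_pCons)
qed

lemma mpe_mult: assumes A: "A \<in> carrier_mat n n"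
  shows "mat_poly_eval (p * q) A = mat_poly_eval p A * mat_poly_eval q A"
proof (induct p rule: pCons_induct)
  case 0
  then show ?case using A by (simp add: mpe_zero)
next
  case (pCons a p)
  let ?P = "mat_poly_eval p A" and ?Q = "mat_poly_eval q A"
  have P: "?P \<in> carrier_mat n n" and Q: "?Q \<in> carrier_mat n n" using A by auto
  have "mat_poly_eval (pCons a p * q) A = mat_poly_eval (Polynomial.smult a q + pCons 0 (p * q)) A"
    by simp
  also have "\<dots> = a \<cdot>\<^sub>m ?Q + (0 \<cdot>\<^sub>m 1\<^sub>m n + ?P * ?Q * A)"
    using A by (simp add: mpe_add[OF A] mpe_smult[OF A] mpe_pCons[OF A] pCons(2))
  also have "(0::'a) \<cdot>\<^sub>m 1\<^sub>m n = 0\<^sub>m n n" by (rule eq_matI) auto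
  also have "0\<^sub>m n n + ?P * ?Q * A = ?P * ?Q * A"
    by (rule left_add_zero_mat) (use A P Q in auto)
  also have "?P * ?Q * A = ?P * (?Q * A)" by (rule assoc_mult_mat[OF P Q A])
  also have "\<dots> = ?P * (A * ?Q)" using mpe_comm[OF A, of q] by simp
  also have "\<dots> = ?P * A * ?Q" by (rule assoc_mult_mat[OF P A Q, symmetric])
  also have "a \<cdot>\<^sub>m ?Q + ?P * A * ?Q = (a \<cdot>\<^sub>m 1\<^sub>m n) * ?Q + ?P * A * ?Q"
    using Q A by (simp add: mult_smult_assoc_mat[OF one_carrier_mat Q])
  also have "\<dots> = (a \<cdot>\<^sub>m 1\<^sub>m n + ?P * A) * ?Q"
    by (rule add_mult_distrib_mat[symmetric]) (use A P Q in auto)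
  finally show ?case using A by (simp add: mpe_pCons)
qed

lemma mpe_const: assumes A: "A \<in> carrier_mat n n"
  shows "mat_poly_eval [:c:] A = c \<cdot>\<^sub>m 1\<^sub>m n"
  using A by (simp add: mpe_pCons[OF A] mpe_zero[OF A])

lemma mpe_lin: assumes A: "A \<in> carrier_mat n n"
  shows "mat_poly_eval [:c, 1:] A = c \<cdot>\<^sub>m 1\<^sub>m n + A"
proof -
  have "1 \<cdot>\<^sub>m 1\<^sub>m n = (1\<^sub>m n :: 'a mat)" by (rule eq_matI) auto
  thus ?thesis using A by (simp add: mpe_pCons[OF A] mpe_zero[OF A])
qed

lemma mpe_sum_index: assumes A: "A \<in> carrier_mat n n" and ij: "i < n" "j < n" and S: "finite S"
  shows "mat_poly_eval (sum f S) A $$ (i,j) = (\<Sum>s\<in>S. mat_poly_eval (f s) A $$ (i,j))"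
  using S
proof (induct S rule: finite_induct)
  case empty
  then show ?case using A ij by (simp add: mpe_zero)
next
  case (insert x F)
  then show ?case using A ij by (simp add: mpe_add)
qed

lemma annihilator_exists: assumes A: "(A :: 'a :: field mat) \<in> carrier_mat n n"
  shows "\<exists>p. p \<noteq> 0 \<and> mat_poly_eval p A = 0\<^sub>m n n"
proof -
  define N where "N = n * n"
  define c where "c = (\<lambda>r. vec (N+1) (\<lambda>k. (A ^\<^sub>m k) $$ (r div n, r mod n)))"
  define M where "M = mat\<^sub>r (N+1) (N+1) (\<lambda>r. if r = N then 0\<^sub>v (N+1) else c r)"
  have "det M = 0" unfolding M_def by (rule det_row_0) (auto simp: c_def)
  moreover have M: "M \<in> carrier_mat (N+1) (N+1)" unfolding M_def by auto
  ultimately obtain v where v: "v \<in> carrier_vec (N+1)" "v \<noteq> 0\<^sub>v (N+1)" "M *\<^sub>v v = 0\<^sub>v (N+1)"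
    using det_0_iff_vec_prod_zero[OF M] by auto
  define p where "p = (\<Sum>k\<le>N. monom (v $ k) k)"
  have cp: "coeff p k = (if k \<le> N then v $ k else 0)" for k
    unfolding p_def by (simp add: coeff_sum coeff_monom)
  have dp: "degree p \<le> N" by (rule degree_le) (auto simp: cp)
  from v obtain k where k: "k < N+1" "v $ k \<noteq> 0"
    by (metis carrier_vecD eq_vecI index_zero_vec(1) index_zero_vec(2))
  have "p \<noteq> 0" using k cp[of k] by auto
  moreover have "mat_poly_eval p A = 0\<^sub>m n n"
  proof (rule eq_matI)
    fix i j assume "i < dim_row (0\<^sub>m n n :: 'a mat)" "j < dim_col (0\<^sub>m n n :: 'a mat)"
    hence ij: "i < n" "j < n" by auto
    have r: "i * n + j < N" using ij
    proof -
      have "i * n + j < Suc i * n" using ij by simp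
      also have "\<dots> \<le> n * n" using ij by (intro mult_le_mono1) simp
      finally show ?thesis by (simp add: N_def)
    qed
    have dm: "(i * n + j) div n = i" "(i * n + j) mod n = j" using ij by auto
    have "mat_poly_eval p A $$ (i,j) = (\<Sum>k\<le>N. v $ k * (A ^\<^sub>m k) $$ (i,j))"
      by (simp add: mpe_index[OF A ij dp] cp)
    also have "\<dots> = (\<Sum>k<N+1. v $ k * (A ^\<^sub>m k) $$ (i,j))"
      by (simp add: lessThan_Suc_atMost)
    also have "\<dots> = (M *\<^sub>v v) $ (i * n + j)"
    proof -
      have "(M *\<^sub>v v) $ (i * n + j) = row M (i * n + j) \<bullet> v" using r M by simp
      also have "row M (i * n + j) = c (i * n + j)" using r unfolding M_def by (simp add: c_def)
      also have "c (i * n + j) \<bullet> v = (\<Sum>k<N+1. (A ^\<^sub>m k) $$ (i,j) * v $ k)"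
        using v dm unfolding c_def by (simp add: scalar_prod_def atLeast0LessThan)
      finally show ?thesis by (simp add: mult.commute)
    qed
    also have "\<dots> = 0" using v r by simp
    finally show "mat_poly_eval p A $$ (i,j) = 0\<^sub>m n n $$ (i,j)" using ij by simp
  qed (use A in auto)
  ultimately show ?thesis by blast
qed

lemma is_minimal_unique: assumes A: "(A :: 'a :: field mat) \<in> carrier_mat n n"
  shows "\<exists>!p. is_minimal_poly A p"
proof -
  let ?P = "\<lambda>d. \<exists>p. p \<noteq> 0 \<and> mat_poly_eval p A = 0\<^sub>m n n \<and> degree p = d"
  from annihilator_exists[OF A] have ex: "\<exists>d. ?P d" by blast
  define d where "d = (LEAST d. ?P d)"
  from LeastI_ex[OF ex] obtain p where p: "p \<noteq> 0" "mat_poly_eval p A = 0\<^sub>m n n" "degree p = d"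
    unfolding d_def by blast
  have dmin: "d \<le> degree q" if "q \<noteq> 0" "mat_poly_eval q A = 0\<^sub>m n n" for q
    unfolding d_def by (rule Least_le) (use that in blast)
  define m where "m = Polynomial.smult (inverse (lead_coeff p)) p"
  have lc: "lead_coeff p \<noteq> 0" using p(1) by simp
  have dm: "degree m = d" unfolding m_def using lc p(3) by simp
  have "is_minimal_poly A m"
    unfolding is_minimal_poly_def
  proof (intro conjI allI impI)
    show "lead_coeff m = 1" unfolding m_def using lc by (simp add: lead_coeff_smult)
    show "mat_poly_eval m A = 0\<^sub>m (dim_row A) (dim_row A)"
      unfolding m_def using A p by (simp add: mpe_smult[OF A])
    fix q assume "q \<noteq> 0 \<and> mat_poly_eval q A = 0\<^sub>m (dim_row A) (dim_row A)"
    thus "degree m \<le> degree q" using dmin A dm by auto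
  qed
  moreover have "p1 = p2" if 1: "is_minimal_poly A p1" and 2: "is_minimal_poly A p2" for p1 p2
  proof (rule ccontr)
    assume ne: "p1 \<noteq> p2"
    have l1: "lead_coeff p1 = 1" and l2: "lead_coeff p2 = 1" using 1 2 unfolding is_minimal_poly_def by auto
    hence nz: "p1 \<noteq> 0" "p2 \<noteq> 0" by auto
    have e1: "mat_poly_eval p1 A = 0\<^sub>m n n" and e2: "mat_poly_eval p2 A = 0\<^sub>m n n"
      using 1 2 A unfolding is_minimal_poly_def by auto
    have deq: "degree p1 = degree p2" using 1 2 nz e1 e2 A unfolding is_minimal_poly_def
      by (meson le_antisym)
    let ?r = "p1 - p2"
    have r0: "?r \<noteq> 0" using ne by simp
    have er: "mat_poly_eval ?r A = 0\<^sub>m n n" using e1 e2 A by (simp add: mpe_minus[OF A])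
    have "degree p1 \<le> degree ?r" using 1 r0 er A unfolding is_minimal_poly_def by auto
    moreover have "degree ?r \<le> degree p1" using deq by (simp add: degree_diff_le)
    ultimately have "degree ?r = degree p1" by simp
    moreover have "coeff ?r (degree p1) = 0" using l1 l2 deq by simp
    ultimately show False using r0 by (metis leading_coeff_0_iff)
  qed
  ultimately show ?thesis by blast
qed

lemma minimal_poly_props: assumes A: "(A :: 'a :: field mat) \<in> carrier_mat n n"
  shows "is_minimal_poly A (minimal_poly A)"
  unfolding minimal_poly_def using is_minimal_unique[OF A] by (rule theI')

lemma mat_vec_lin: assumes N: "(N :: 'a :: field mat) \<in> carrier_mat n n" and c: "c \<in> carrier_vec n"
  and y: "y \<in> carrier_vec n"
  shows "N *\<^sub>v (c + t \<cdot>\<^sub>v y) = N *\<^sub>v c + t \<cdot>\<^sub>v (N *\<^sub>v y)"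
  using mult_add_distrib_mat_vec[OF N c, of "t \<cdot>\<^sub>v y"] mult_mat_vec[OF N y, of t] y by simp

lemma subsingleton_finite: "(\<And>x y. x \<in> S \<Longrightarrow> y \<in> S \<Longrightarrow> x = y) \<Longrightarrow> finite S"
  by (metis finite.simps is_singletonI' is_singleton_the_elem)

lemma avoid_kernels:
  fixes F :: "'a :: field_char_0 mat set"
  assumes "finite F" "F \<subseteq> carrier_mat n n" "\<forall>M\<in>F. M \<noteq> 0\<^sub>m n n"
  shows "\<exists>c \<in> carrier_vec n. \<forall>M\<in>F. M *\<^sub>v c \<noteq> 0\<^sub>v n"
  using assms
proof (induct F rule: finite_induct)
  case empty
  then show ?case by (intro bexI[of _ "0\<^sub>v n"]) auto
next
  case (insert M F)
  from insert obtain c where c: "c \<in> carrier_vec n" and cF: "\<forall>N\<in>F. N *\<^sub>v c \<noteq> 0\<^sub>v n" by auto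
  have M: "M \<in> carrier_mat n n" and M0: "M \<noteq> 0\<^sub>m n n" using insert by auto
  have FC: "F \<subseteq> carrier_mat n n" using insert by auto
  show ?case
  proof (cases "M *\<^sub>v c = 0\<^sub>v n")
    case False
    thus ?thesis using c cF by auto
  next
    case Mc: True
    obtain i j where ij: "i < n" "j < n" "M $$ (i,j) \<noteq> 0"
    proof (rule ccontr)
      assume "\<not> thesis"
      with that have "\<forall>i<n. \<forall>j<n. M $$ (i,j) = 0" by blast
      hence "M = 0\<^sub>m n n" using M by (intro eq_matI) auto
      with M0 show False by simp
    qed
    define y where "y = (unit_vec n j :: 'a vec)"
    have y: "y \<in> carrier_vec n" unfolding y_def by simp
    have My: "M *\<^sub>v y \<noteq> 0\<^sub>v n"
    proof
      assume "M *\<^sub>v y = 0\<^sub>v n"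
      hence "(M *\<^sub>v y) $ i = 0" using ij by simp
      moreover have "(M *\<^sub>v y) $ i = M $$ (i,j)" using M ij unfolding y_def by simp
      ultimately show False using ij by simp
    qed
    define B where "B = {0} \<union> (\<Union>N\<in>F. {t. N *\<^sub>v (c + t \<cdot>\<^sub>v y) = 0\<^sub>v n})"
    have finB: "finite B" unfolding B_def
    proof (intro finite_UnI finite_UN_I insert(1) subsingleton_finite; clarsimp?)
      fix N t s assume N: "N \<in> F" and t: "N *\<^sub>v (c + t \<cdot>\<^sub>v y) = 0\<^sub>v n"
        and s: "N *\<^sub>v (c + s \<cdot>\<^sub>v y) = 0\<^sub>v n"
      have NC: "N \<in> carrier_mat n n" using N FC by auto
      show "t = s"
      proof (rule ccontr)
        assume ts: "t \<noteq> s"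
        have "N *\<^sub>v c = 0\<^sub>v n"
        proof (rule eq_vecI)
          fix k assume "k < dim_vec (0\<^sub>v n :: 'a vec)"
          hence k: "k < n" by simp
          have 1: "(N *\<^sub>v c) $ k + t * (N *\<^sub>v y) $ k = 0"
            using arg_cong[OF t, of "\<lambda>v. v $ k"] mat_vec_lin[OF NC c y, of t] k NC by simp
          have 2: "(N *\<^sub>v c) $ k + s * (N *\<^sub>v y) $ k = 0"
            using arg_cong[OF s, of "\<lambda>v. v $ k"] mat_vec_lin[OF NC c y, of s] k NC by simp
          from 1 2 have "t * (N *\<^sub>v y) $ k = s * (N *\<^sub>v y) $ k" by (metis add_left_cancel)
          hence "(t - s) * (N *\<^sub>v y) $ k = 0" by (simp add: left_diff_distrib)
          with ts have "(N *\<^sub>v y) $ k = 0" by simp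
          with 1 show "(N *\<^sub>v c) $ k = 0\<^sub>v n $ k" using k by simp
        qed (use NC in simp)
        with cF N show False by auto
      qed
    qed
    from ex_new_if_finite[OF infinite_UNIV_char_0 finB] obtain t :: 'a where t: "t \<notin> B" by auto
    define c' where "c' = c + t \<cdot>\<^sub>v y"
    have c': "c' \<in> carrier_vec n" unfolding c'_def using c y by simp
    have "M *\<^sub>v c' \<noteq> 0\<^sub>v n"
    proof
      assume "M *\<^sub>v c' = 0\<^sub>v n"
      hence "t \<cdot>\<^sub>v (M *\<^sub>v y) = 0\<^sub>v n" unfolding c'_def using mat_vec_lin[OF M c y, of t] Mc M y by simp
      moreover have "t \<noteq> 0" using t unfolding B_def by auto
      ultimately have "M *\<^sub>v y = 0\<^sub>v n"
      proof (intro eq_vecI)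
        fix k assume tM: "t \<cdot>\<^sub>v (M *\<^sub>v y) = 0\<^sub>v n" and t0: "t \<noteq> 0" and k: "k < dim_vec (0\<^sub>v n :: 'a vec)"
        from arg_cong[OF tM, of "\<lambda>v. v $ k"] k M have "t * (M *\<^sub>v y) $ k = 0" by simp
        thus "(M *\<^sub>v y) $ k = 0\<^sub>v n $ k" using t0 k by simp
      qed (use M in simp)
      with My show False by simp
    qed
    moreover have "\<forall>N\<in>F. N *\<^sub>v c' \<noteq> 0\<^sub>v n" using t unfolding B_def c'_def by auto
    ultimately show ?thesis using c' by auto
  qed
qed

lemma mat_vec_zero: "(M :: 'a :: field mat) \<in> carrier_mat n n \<Longrightarrow> M *\<^sub>v 0\<^sub>v n = 0\<^sub>v n"
  by (intro eq_vecI) (auto simp: scalar_prod_def)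

lemma zero_mat_vec: "c \<in> carrier_vec m \<Longrightarrow> 0\<^sub>m n m *\<^sub>v (c :: 'a :: field vec) = 0\<^sub>v n"
  by (intro eq_vecI) (auto simp: scalar_prod_def)

lemma mpe_mult_vec: assumes A: "A \<in> carrier_mat n n" and c: "c \<in> carrier_vec n"
  shows "mat_poly_eval (p * q) A *\<^sub>v c = mat_poly_eval p A *\<^sub>v (mat_poly_eval q A *\<^sub>v c)"
  using A c by (simp add: mpe_mult[OF A] assoc_mult_mat_vec[OF mpe_carrier[OF A] mpe_carrier[OF A] c])

lemma cyclic_vector:
  fixes A :: "'a :: {field_char_0, field_gcd} mat"
  assumes A: "A \<in> carrier_mat n n" and chi0: "\<chi> \<noteq> 0" and echi: "mat_poly_eval \<chi> A = 0\<^sub>m n n"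
  and mini: "\<forall>q. q \<noteq> 0 \<and> mat_poly_eval q A = 0\<^sub>m n n \<longrightarrow> degree \<chi> \<le> degree q"
  shows "\<exists>c \<in> carrier_vec n. \<forall>p. p \<noteq> 0 \<and> degree p < degree \<chi> \<longrightarrow> mat_poly_eval p A *\<^sub>v c \<noteq> 0\<^sub>v n"
proof -
  define F where "F = (\<lambda>q. mat_poly_eval (\<chi> div q) A) ` set_mset (prime_factorization \<chi>)"
  have "\<exists>c \<in> carrier_vec n. \<forall>M\<in>F. M *\<^sub>v c \<noteq> 0\<^sub>v n"
  proof (rule avoid_kernels)
    show "finite F" unfolding F_def by simp
    show "F \<subseteq> carrier_mat n n" unfolding F_def using A by auto
    show "\<forall>M\<in>F. M \<noteq> 0\<^sub>m n n"
    proof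
      fix M assume "M \<in> F"
      then obtain q where q: "q \<in># prime_factorization \<chi>" and M: "M = mat_poly_eval (\<chi> div q) A"
        unfolding F_def by auto
      have pq: "prime q" "q dvd \<chi>" using q by (auto simp: in_prime_factors_iff)
      have q0: "q \<noteq> 0" using pq by auto
      have eq: "\<chi> = q * (\<chi> div q)" using pq(2) by simp
      have d0: "\<chi> div q \<noteq> 0" using eq chi0 by (metis mult_zero_right)
      have "degree \<chi> = degree q + degree (\<chi> div q)"
        by (subst eq, rule degree_mult_eq[OF q0 d0])
      moreover have "degree q \<noteq> 0"
      proof
        assume "degree q = 0"
        hence "is_unit q" using is_unit_iff_degree[OF q0] by simp
        thus False using pq(1) not_prime_unit by blast
      qed
      ultimately have "degree (\<chi> div q) < degree \<chi>" by simp
      thus "M \<noteq> 0\<^sub>m n n" using mini d0 M by auto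
    qed
  qed
  then obtain c where c: "c \<in> carrier_vec n" and cF: "\<forall>M\<in>F. M *\<^sub>v c \<noteq> 0\<^sub>v n" by auto
  show ?thesis
  proof (intro bexI[OF _ c] allI impI)
    fix p :: "'a poly" assume p: "p \<noteq> 0 \<and> degree p < degree \<chi>"
    show "mat_poly_eval p A *\<^sub>v c \<noteq> 0\<^sub>v n"
    proof
      assume pc: "mat_poly_eval p A *\<^sub>v c = 0\<^sub>v n"
      define g where "g = gcd p \<chi>"
      obtain s t where st: "bezout_coefficients p \<chi> = (s, t)" by (cases "bezout_coefficients p \<chi>")
      have bez: "s * p + t * \<chi> = g" unfolding g_def by (rule bezout_coefficients[OF st])
      have gc: "mat_poly_eval g A *\<^sub>v c = 0\<^sub>v n"
      proof -
        have "mat_poly_eval g A *\<^sub>v c = mat_poly_eval (s * p) A *\<^sub>v c + mat_poly_eval (t * \<chi>) A *\<^sub>v c"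
          unfolding bez[symmetric] using A c by (simp add: mpe_add[OF A] add_mult_distrib_mat_vec[of _ n n])
        also have "\<dots> = 0\<^sub>v n"
          using A c pc echi by (simp add: mpe_mult_vec[OF A c] mat_vec_zero zero_mat_vec)
        finally show ?thesis .
      qed
      have g0: "g \<noteq> 0" unfolding g_def using p by simp
      have "degree g \<le> degree p" unfolding g_def using p by (intro dvd_imp_degree_le) auto
      hence dg: "degree g < degree \<chi>" using p by simp
      define h where "h = \<chi> div g"
      have gd: "g dvd \<chi>" unfolding g_def by simp
      have chi: "\<chi> = g * h" unfolding h_def using gd by simp
      have h0: "h \<noteq> 0" using chi chi0 by auto
      have "degree \<chi> = degree g + degree h" by (subst chi, rule degree_mult_eq[OF g0 h0])
      hence "\<not> is_unit h" using dg is_unit_iff_degree[OF h0] by auto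
      then obtain q where q: "prime q" "q dvd h" using prime_divisorE[OF h0] by metis
      have q0: "q \<noteq> 0" using q by auto
      have "q dvd \<chi>" using q(2) chi by simp
      hence qF: "mat_poly_eval (\<chi> div q) A \<in> F" unfolding F_def using q chi0 by (auto intro: prime_factorsI)
      from q(2) obtain r where r: "h = q * r" by (elim dvdE)
      have "\<chi> div q = r * g" using chi r q0 by (simp add: ac_simps)
      hence "mat_poly_eval (\<chi> div q) A *\<^sub>v c = 0\<^sub>v n"
        using A c gc by (simp add: mpe_mult_vec[OF A c] mat_vec_zero)
      with cF qF show False by auto
    qed
  qed
qed

lemma inv_exists: assumes U: "(U :: 'a :: field mat) \<in> carrier_mat l l" and d: "det U \<noteq> 0"
  shows "\<exists>V \<in> carrier_mat l l. U * V = 1\<^sub>m l \<and> V * U = 1\<^sub>m l"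
  using det_non_zero_imp_unit[OF U d, of "()"] unfolding Units_def by (auto simp: ring_mat_simps)

lemma smult_one_mat_vec: assumes v: "v \<in> carrier_vec n" shows "((s :: 'a :: field) \<cdot>\<^sub>m 1\<^sub>m n) *\<^sub>v v = s \<cdot>\<^sub>v v"
proof -
  have "s \<cdot>\<^sub>v v = s \<cdot>\<^sub>v (1\<^sub>m n *\<^sub>v v)" using v by auto
  also have "\<dots> = (s \<cdot>\<^sub>m 1\<^sub>m n) *\<^sub>v v" using v by auto
  finally show ?thesis by simp
qed

lemma rank_le_len: "\<forall>S\<in>set Ts. rank_one_tensor m n S \<Longrightarrow> tensor_sum m n Ts = T \<Longrightarrow> tensor_rank m n T \<le> length Ts"
  unfolding tensor_rank_def by (rule Least_le) auto

lemma tensor_sum_index: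
  assumes "\<forall>S\<in>set Ts. fst S \<in> carrier_mat l l \<and> snd S \<in> carrier_mat l l"
  shows "tensor_sum l l Ts = (mat l l (\<lambda>ij. \<Sum>S\<leftarrow>Ts. fst S $$ ij), mat l l (\<lambda>ij. \<Sum>S\<leftarrow>Ts. snd S $$ ij))"
  using assms
proof (induct Ts)
  case Nil
  then show ?case unfolding tensor_sum_def tensor_zero_def by (auto intro!: eq_matI)
next
  case (Cons S Ts)
  hence IH: "tensor_sum l l Ts = (mat l l (\<lambda>ij. \<Sum>S\<leftarrow>Ts. fst S $$ ij), mat l l (\<lambda>ij. \<Sum>S\<leftarrow>Ts. snd S $$ ij))"
    and S: "fst S \<in> carrier_mat l l" "snd S \<in> carrier_mat l l" by auto
  have "tensor_sum l l (S # Ts) = tensor_add S (tensor_sum l l Ts)" unfolding tensor_sum_def by simp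
  also have "\<dots> = (mat l l (\<lambda>ij. \<Sum>S\<leftarrow>S # Ts. fst S $$ ij), mat l l (\<lambda>ij. \<Sum>S\<leftarrow>S # Ts. snd S $$ ij))"
    unfolding IH tensor_add_def using S by (auto intro!: eq_matI)
  finally show ?case .
qed

lemma main_generic:
  fixes A :: "'a :: {field_char_0, field_gcd} mat"
  assumes A: "A \<in> carrier_mat l l" and mp: "minimal_poly A = char_poly A"
  shows "(\<exists>T. T \<in> tensor_carrier l l \<and> tensor_rank l l T \<le> 1
                 \<and> tensor_diagonalizable l l (tensor_minus (1\<^sub>m l, A) T))
            \<and> tensor_rank l l (1\<^sub>m l, A) \<le> l + 1"
proof -
  define \<chi> where "\<chi> = char_poly A"
  have ism: "is_minimal_poly A \<chi>" using minimal_poly_props[OF A] mp unfolding \<chi>_def by simp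
  have dA: "dim_row A = l" using A by simp
  have lc: "lead_coeff \<chi> = 1" and echi: "mat_poly_eval \<chi> A = 0\<^sub>m l l"
    and mini: "\<forall>q. q \<noteq> 0 \<and> mat_poly_eval q A = 0\<^sub>m l l \<longrightarrow> degree \<chi> \<le> degree q"
    using ism dA unfolding is_minimal_poly_def by auto
  have chi0: "\<chi> \<noteq> 0" using lc by auto
  have dchi: "degree \<chi> = l" unfolding \<chi>_def using degree_monic_char_poly[OF A] by simp
  obtain c where c: "c \<in> carrier_vec l"
    and cyc: "\<And>p. p \<noteq> 0 \<Longrightarrow> degree p < l \<Longrightarrow> mat_poly_eval p A *\<^sub>v c \<noteq> 0\<^sub>v l"
    using cyclic_vector[OF A chi0 echi mini] dchi by auto
  define r :: "nat \<Rightarrow> 'a" where "r = of_nat"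
  have rinj: "r i = r j \<longleftrightarrow> i = j" for i j unfolding r_def by simp
  define lin where "lin = (\<lambda>k. [: - r k, 1 :])"
  define L where "L = (\<lambda>j. \<Prod>k\<in>{0..<l} - {j}. lin k)"
  define qq where "qq = (\<Prod>k\<in>{0..<l}. lin k)"
  define u where "u = (\<lambda>j. mat_poly_eval (L j) A *\<^sub>v c)"
  have u: "u j \<in> carrier_vec l" for j unfolding u_def by (rule mult_mat_vec_carrier[OF mpe_carrier[OF A] c])
  define U where "U = mat l l (\<lambda>(i,j). u j $ i)"
  have U: "U \<in> carrier_mat l l" unfolding U_def by simp
  have colU: "col U j = u j" if "j < l" for j using that u[of j] unfolding U_def by (intro eq_vecI) auto
  have poly_L: "poly (L j) (r k) = (if k = j then (\<Prod>i\<in>{0..<l} - {j}. r j - r i) else 0)"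
    if "k < l" for j k
  proof -
    have "poly (L j) (r k) = (\<Prod>i\<in>{0..<l} - {j}. r k - r i)" unfolding L_def lin_def
      by (simp add: poly_prod)
    thus ?thesis using that by (auto simp: prod_zero_iff)
  qed
  have Ljj: "(\<Prod>i\<in>{0..<l} - {j}. r j - r i) \<noteq> 0" for j
    using rinj by (auto simp: prod_zero_iff)
  have degL: "degree (L j) \<le> l - 1" if "j < l" for j
  proof -
    have "degree (L j) \<le> (\<Sum>k\<in>{0..<l} - {j}. degree (lin k))"
      unfolding L_def using degree_prod_sum_le[of "{0..<l} - {j}" lin] by (simp add: o_def)
    also have "\<dots> = card ({0..<l} - {j})" unfolding lin_def by simp
    also have "\<dots> = l - 1" using that by simp
    finally show ?thesis .
  qed
  have detU: "det U \<noteq> 0"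
  proof
    assume "det U = 0"
    then obtain x where x: "x \<in> carrier_vec l" "x \<noteq> 0\<^sub>v l" "U *\<^sub>v x = 0\<^sub>v l"
      using det_0_iff_vec_prod_zero[OF U] by auto
    define p where "p = (\<Sum>j<l. Polynomial.smult (x $ j) (L j))"
    have pc: "mat_poly_eval p A *\<^sub>v c = U *\<^sub>v x"
    proof (rule eq_vecI)
      fix i assume "i < dim_vec (U *\<^sub>v x)" hence i: "i < l" using U by simp
      have "(mat_poly_eval p A *\<^sub>v c) $ i = (\<Sum>m<l. mat_poly_eval p A $$ (i,m) * c $ m)"
        using A c i by (simp add: scalar_prod_def atLeast0LessThan)
      also have "\<dots> = (\<Sum>m<l. (\<Sum>j<l. x$j * mat_poly_eval (L j) A $$ (i,m)) * c$m)"
        using A i unfolding p_def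
        by (intro sum.cong refl, simp add: mpe_sum_index[OF A] mpe_smult[OF A])
      also have "\<dots> = (\<Sum>m<l. \<Sum>j<l. x$j * mat_poly_eval (L j) A $$ (i,m) * c$m)"
        by (simp add: sum_distrib_right)
      also have "\<dots> = (\<Sum>j<l. \<Sum>m<l. x$j * mat_poly_eval (L j) A $$ (i,m) * c$m)"
        by (rule sum.swap)
      also have "\<dots> = (\<Sum>j<l. x$j * (\<Sum>m<l. mat_poly_eval (L j) A $$ (i,m) * c$m))"
        by (simp add: sum_distrib_left mult.assoc)
      also have "\<dots> = (\<Sum>j<l. U $$ (i,j) * x $ j)"
        using A c i by (auto intro!: sum.cong simp: U_def u_def scalar_prod_def atLeast0LessThan)
      also have "\<dots> = (U *\<^sub>v x) $ i" using U x(1) i by (simp add: scalar_prod_def atLeast0LessThan)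
      finally show "(mat_poly_eval p A *\<^sub>v c) $ i = (U *\<^sub>v x) $ i" .
    qed (use A U in simp)
    from x obtain k where k: "k < l" "x $ k \<noteq> 0"
      by (metis carrier_vecD eq_vecI index_zero_vec(1) index_zero_vec(2))
    have "poly p (r k) = (\<Sum>j<l. x $ j * poly (L j) (r k))" unfolding p_def by (simp add: poly_sum)
    also have "\<dots> = x $ k * (\<Prod>i\<in>{0..<l} - {k}. r k - r i)"
      using k by (simp add: poly_L if_distrib sum.delta cong: if_cong)
    finally have "poly p (r k) \<noteq> 0" using k Ljj by simp
    hence p0: "p \<noteq> 0" by auto
    have "degree p \<le> l - 1" unfolding p_def
      by (intro degree_sum_le, simp, rule order.trans[OF degree_smult_le degL], simp)
    hence "degree p < l" using k by simp
    from cyc[OF p0 this] pc x(3) show False by simp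
  qed
  obtain V where V: "V \<in> carrier_mat l l" "U * V = 1\<^sub>m l" "V * U = 1\<^sub>m l"
    using inv_exists[OF U detU] by auto
  define a where "a = mat_poly_eval qq A *\<^sub>v c"
  have a: "a \<in> carrier_vec l" unfolding a_def by (rule mult_mat_vec_carrier[OF mpe_carrier[OF A] c])
  define b where "b = vec l (\<lambda>k. \<Sum>j<l. V $$ (j,k))"
  have b: "b \<in> carrier_vec l" unfolding b_def by simp
  define M where "M = mat l l (\<lambda>(i,k). a $ i * b $ k)"
  have M: "M \<in> carrier_mat l l" unfolding M_def by simp
  have F1: "A *\<^sub>v u j = a + r j \<cdot>\<^sub>v u j" if j: "j < l" for j
  proof -
    have qq: "qq = lin j * L j" unfolding qq_def L_def using j by (simp add: prod.remove)
    have "a = mat_poly_eval (lin j) A *\<^sub>v u j"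
      unfolding a_def qq u_def by (rule mpe_mult_vec[OF A c])
    also have "mat_poly_eval (lin j) A = (- r j) \<cdot>\<^sub>m 1\<^sub>m l + A"
      unfolding lin_def by (rule mpe_lin[OF A])
    also have "((- r j) \<cdot>\<^sub>m 1\<^sub>m l + A) *\<^sub>v u j = (- r j) \<cdot>\<^sub>v u j + A *\<^sub>v u j"
      using add_mult_distrib_mat_vec[OF _ A u[of j], of "(- r j) \<cdot>\<^sub>m 1\<^sub>m l"] smult_one_mat_vec[OF u[of j]]
      by simp
    finally have e: "a = (- r j) \<cdot>\<^sub>v u j + A *\<^sub>v u j" .
    show ?thesis
    proof (rule eq_vecI)
      fix i assume "i < dim_vec (a + r j \<cdot>\<^sub>v u j)"
      hence i: "i < l" using a u[of j] by simp
      have "a $ i = - r j * u j $ i + (A *\<^sub>v u j) $ i"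
        using arg_cong[OF e, of "\<lambda>v. v $ i"] i A u[of j] by simp
      thus "(A *\<^sub>v u j) $ i = (a + r j \<cdot>\<^sub>v u j) $ i" using i u[of j] a by simp
    qed (use A a u[of j] in simp)
  qed
  have F2: "b \<bullet> u j = 1" if j: "j < l" for j
  proof -
    have "b \<bullet> u j = (\<Sum>k<l. (\<Sum>i<l. V $$ (i,k)) * U $$ (k,j))"
      unfolding b_def using u[of j] j by (simp add: scalar_prod_def atLeast0LessThan U_def)
    also have "\<dots> = (\<Sum>k<l. \<Sum>i<l. V $$ (i,k) * U $$ (k,j))" by (simp add: sum_distrib_right)
    also have "\<dots> = (\<Sum>i<l. \<Sum>k<l. V $$ (i,k) * U $$ (k,j))" by (rule sum.swap)
    also have "\<dots> = (\<Sum>i<l. (V * U) $$ (i,j))"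
      using V(1) U j by (intro sum.cong refl) (simp add: scalar_prod_def atLeast0LessThan)
    also have "\<dots> = (\<Sum>i<l. if i = j then 1 else 0)"
      by (intro sum.cong refl) (subst V(3), use j in simp)
    also have "\<dots> = 1" using j by simp
    finally show ?thesis .
  qed
  have F3: "M *\<^sub>v u j = a" if j: "j < l" for j
  proof (rule eq_vecI)
    fix i assume "i < dim_vec a" hence i: "i < l" using a by simp
    have "(M *\<^sub>v u j) $ i = (\<Sum>k<l. a $ i * b $ k * u j $ k)"
      unfolding M_def using i u[of j] by (simp add: scalar_prod_def atLeast0LessThan)
    also have "\<dots> = a $ i * (b \<bullet> u j)"
      using u[of j] b by (simp add: scalar_prod_def atLeast0LessThan sum_distrib_left mult.assoc)
    finally show "(M *\<^sub>v u j) $ i = a $ i" using F2[OF j] by simp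
  qed (use M a in simp)
  define A' where "A' = A - M"
  have A': "A' \<in> carrier_mat l l" unfolding A'_def using A M by (simp add: minus_carrier_mat)
  have F4: "A' *\<^sub>v u j = r j \<cdot>\<^sub>v u j" if j: "j < l" for j
  proof -
    have "A' *\<^sub>v u j = A *\<^sub>v u j - M *\<^sub>v u j"
      unfolding A'_def by (rule minus_mult_distrib_mat_vec[OF A M u])
    also have "\<dots> = r j \<cdot>\<^sub>v u j" unfolding F1[OF j] F3[OF j]
      by (intro eq_vecI) (use a u[of j] in auto)
    finally show ?thesis .
  qed
  define D where "D = mat l l (\<lambda>(i,j). if i = j then r i else 0)"
  have D: "D \<in> carrier_mat l l" unfolding D_def by simp
  have AU: "A' * U = U * D"
  proof (rule eq_matI)
    fix i j assume "i < dim_row (U * D)" "j < dim_col (U * D)"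
    hence ij: "i < l" "j < l" using U D by auto
    have "(A' * U) $$ (i,j) = (A' *\<^sub>v u j) $ i" using ij A' U colU[of j] by simp
    also have "\<dots> = r j * U $$ (i,j)" using F4[OF ij(2)] ij u[of j] unfolding U_def by simp
    also have "\<dots> = (U * D) $$ (i,j)"
      using ij U unfolding D_def
      by (simp add: scalar_prod_def if_distrib sum.delta cong: if_cong)
    finally show "(A' * U) $$ (i,j) = (U * D) $$ (i,j)" .
  qed (use A' U D in auto)
  define T where "T = ((0::'a) \<cdot>\<^sub>m M, (1::'a) \<cdot>\<^sub>m M)"
  have M1: "(1::'a) \<cdot>\<^sub>m M = M" by (rule eq_matI) (use M in auto)
  have M0: "(0::'a) \<cdot>\<^sub>m M = 0\<^sub>m l l" by (rule eq_matI) (use M in auto)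
  have Tc: "T \<in> tensor_carrier l l" unfolding T_def tensor_carrier_def using M by simp
  have Tm: "tensor_minus (1\<^sub>m l, A) T = (1\<^sub>m l, A')"
  proof -
    have "1\<^sub>m l - 0\<^sub>m l l = (1\<^sub>m l :: 'a mat)" by (rule eq_matI) auto
    thus ?thesis unfolding tensor_minus_def T_def A'_def M1 M0 by simp
  qed
  have diag: "tensor_diagonalizable l l (tensor_minus (1\<^sub>m l, A) T)"
    unfolding Tm tensor_diagonalizable_def
  proof (intro exI conjI)
    show "V \<in> carrier_mat l l" "U \<in> carrier_mat l l" by fact+
    show "invertible_mat V" "invertible_mat U"
      unfolding invertible_mat_def inverts_mat_def using U V by auto
    show "diagonal_mat (V * fst (1\<^sub>m l, A') * U)"
      using V U by (simp add: diagonal_mat_def)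
    have "V * A' * U = V * (A' * U)" using V A' U by simp
    also have "\<dots> = V * U * D" unfolding AU by (rule assoc_mult_mat[OF V(1) U D, symmetric])
    also have "\<dots> = D" using V(3) D by simp
    finally show "diagonal_mat (V * snd (1\<^sub>m l, A') * U)" by (simp add: D_def diagonal_mat_def)
  qed
  have T1: "rank_one_tensor l l T" if False: "M \<noteq> 0\<^sub>m l l"
  proof -
    have a0: "a \<noteq> 0\<^sub>v l"
    proof
      assume "a = 0\<^sub>v l" hence "M = 0\<^sub>m l l" unfolding M_def by (intro eq_matI) auto
      with False show False by simp
    qed
    have b0: "b \<noteq> 0\<^sub>v l"
    proof
      assume "b = 0\<^sub>v l" hence "M = 0\<^sub>m l l" unfolding M_def by (intro eq_matI) auto
      with False show False by simp
    qed
    show "rank_one_tensor l l T" unfolding rank_one_tensor_def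
      by (rule exI[of _ 0], rule exI[of _ 1], rule exI[of _ a], rule exI[of _ b])
        (use a b a0 b0 in \<open>auto simp: T_def M_def\<close>)
  qed
  have rT: "tensor_rank l l T \<le> 1"
  proof (cases "M = 0\<^sub>m l l")
    case True
    have "tensor_rank l l T \<le> length ([] :: 'a tensor2 list)"
      by (rule rank_le_len) (auto simp: tensor_sum_def tensor_zero_def T_def True)
    thus ?thesis by simp
  next
    case False
    have a0: "a \<noteq> 0\<^sub>v l"
    proof
      assume "a = 0\<^sub>v l" hence "M = 0\<^sub>m l l" unfolding M_def by (intro eq_matI) auto
      with False show False by simp
    qed
    have b0: "b \<noteq> 0\<^sub>v l"
    proof
      assume "b = 0\<^sub>v l" hence "M = 0\<^sub>m l l" unfolding M_def by (intro eq_matI) auto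
      with False show False by simp
    qed
    have "rank_one_tensor l l T" unfolding rank_one_tensor_def
      by (rule exI[of _ 0], rule exI[of _ 1], rule exI[of _ a], rule exI[of _ b])
        (use a b a0 b0 in \<open>auto simp: T_def M_def\<close>)
    moreover have "tensor_sum l l [T] = T"
      unfolding tensor_sum_def tensor_zero_def tensor_add_def using Tc
      by (cases T) (auto simp: tensor_carrier_def)
    ultimately have "tensor_rank l l T \<le> length [T]" by (intro rank_le_len) auto
    thus ?thesis by simp
  qed
  have UD: "(U * D) $$ (i,j) = r j * U $$ (i,j)" if ij: "i < l" "j < l" for i j
    using ij U unfolding D_def by (simp add: scalar_prod_def if_distrib sum.delta cong: if_cong)
  have A'UDV: "A' = U * D * V"
  proof -
    have "A' = A' * (U * V)" using A' V(2) by simp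
    also have "\<dots> = A' * U * V" by (rule assoc_mult_mat[OF A' U V(1), symmetric])
    finally show ?thesis unfolding AU .
  qed
  define W where "W = (\<lambda>j. mat l l (\<lambda>(i,k). U $$ (i,j) * V $$ (j,k)))"
  define S where "S = (\<lambda>j. ((1::'a) \<cdot>\<^sub>m W j, r j \<cdot>\<^sub>m W j))"
  have VU1: "row V j \<bullet> col U j = 1" if j: "j < l" for j
  proof -
    have "(V * U) $$ (j,j) = 1" using V(3) j by simp
    thus ?thesis using j V(1) U by simp
  qed
  have S1: "rank_one_tensor l l (S j)" if j: "j < l" for j
    unfolding rank_one_tensor_def
  proof (rule exI[of _ 1], rule exI[of _ "r j"], rule exI[of _ "col U j"], rule exI[of _ "row V j"], intro conjI)
    show "col U j \<in> carrier_vec l" "row V j \<in> carrier_vec l" using U V(1) by auto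
    show "col U j \<noteq> 0\<^sub>v l"
    proof
      assume "col U j = 0\<^sub>v l"
      hence "row V j \<bullet> col U j = 0" using V(1) j by simp
      with VU1[OF j] show False by simp
    qed
    show "row V j \<noteq> 0\<^sub>v l"
    proof
      assume "row V j = 0\<^sub>v l"
      hence "row V j \<bullet> col U j = 0" using U j by simp
      with VU1[OF j] show False by simp
    qed
    have "mat l l (\<lambda>(i,k). col U j $ i * row V j $ k) = W j"
      unfolding W_def using U V(1) j by (intro eq_matI) auto
    thus "S j = (1 \<cdot>\<^sub>m mat l l (\<lambda>(i, k). col U j $ i * row V j $ k),
                 r j \<cdot>\<^sub>m mat l l (\<lambda>(i, k). col U j $ i * row V j $ k))"
      unfolding S_def by simp
  qed simp
  define Ts0 where "Ts0 = (if M = 0\<^sub>m l l then [] else [T])"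
  define Ts where "Ts = Ts0 @ map S [0..<l]"
  have Tsr: "\<forall>S'\<in>set Ts. rank_one_tensor l l S'"
    unfolding Ts_def Ts0_def using T1 S1 by auto
  have Tsc: "\<forall>S'\<in>set Ts. fst S' \<in> carrier_mat l l \<and> snd S' \<in> carrier_mat l l"
    unfolding Ts_def Ts0_def S_def W_def T_def using M by auto
  have fst0: "(\<Sum>S'\<leftarrow>Ts0. fst S' $$ (i,k)) = 0" if "i < l" "k < l" for i k
    unfolding Ts0_def T_def using that M by auto
  have snd0: "(\<Sum>S'\<leftarrow>Ts0. snd S' $$ (i,k)) = M $$ (i,k)" if "i < l" "k < l" for i k
    unfolding Ts0_def T_def using that M by auto
  have sl: "(\<Sum>S'\<leftarrow>map S [0..<l]. f S') = (\<Sum>j<l. f (S j))" for f :: "'a tensor2 \<Rightarrow> 'a"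
    by (simp add: sum_set_upt_conv_sum_list_nat[symmetric] atLeast0LessThan comp_def)
  have "tensor_sum l l Ts = (1\<^sub>m l, A)"
    unfolding tensor_sum_index[OF Tsc]
  proof (simp, intro conjI eq_matI, goal_cases)
    case (1 i k)
    hence ik: "i < l" "k < l" by auto
    have "(\<Sum>S'\<leftarrow>Ts. fst S' $$ (i,k)) = (\<Sum>j<l. U $$ (i,j) * V $$ (j,k))"
      unfolding Ts_def map_append sum_list_append sl using ik fst0[OF ik] by (simp add: S_def W_def)
    also have "\<dots> = (U * V) $$ (i,k)" using ik U V(1) by (simp add: scalar_prod_def atLeast0LessThan)
    finally show ?case using ik V(2) by simp
  next
    case (4 i k)
    hence ik: "i < l" "k < l" using A by auto
    have "(\<Sum>S'\<leftarrow>Ts. snd S' $$ (i,k)) = M $$ (i,k) + (\<Sum>j<l. r j * (U $$ (i,j) * V $$ (j,k)))"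
      unfolding Ts_def map_append sum_list_append sl using ik snd0[OF ik] by (simp add: S_def W_def)
    also have "(\<Sum>j<l. r j * (U $$ (i,j) * V $$ (j,k))) = (U * D * V) $$ (i,k)"
    proof -
      have "(U * D * V) $$ (i,k) = (\<Sum>m<l. (U * D) $$ (i,m) * V $$ (m,k))"
        using ik U V(1) D by (simp add: scalar_prod_def atLeast0LessThan del: assoc_mult_mat)
      also have "\<dots> = (\<Sum>j<l. r j * (U $$ (i,j) * V $$ (j,k)))"
        using ik by (intro sum.cong refl) (simp add: UD)
      finally show ?thesis by simp
    qed
    also have "\<dots> = A' $$ (i,k)" unfolding A'UDV ..
    finally show ?case using ik A M unfolding A'_def by simp
  qed (use A in auto)
  hence "tensor_rank l l (1\<^sub>m l, A) \<le> length Ts" using rank_le_len[OF Tsr] by simp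
  also have "length Ts \<le> l + 1" unfolding Ts_def Ts0_def by simp
  finally show ?thesis using Tc rT diag by blast
qed


theorem mainTheorem3:
  shows "(\<forall>(l::nat) (A::real mat). A \<in> carrier_mat l l \<and> minimal_poly A = char_poly A \<longrightarrow>
            (\<exists>T. T \<in> tensor_carrier l l \<and> tensor_rank l l T \<le> 1
                 \<and> tensor_diagonalizable l l (tensor_minus (1\<^sub>m l, A) T))
            \<and> tensor_rank l l (1\<^sub>m l, A) \<le> l + 1)
       \<and> (\<forall>(l::nat) (A::complex mat). A \<in> carrier_mat l l \<and> minimal_poly A = char_poly A \<longrightarrow>
            (\<exists>T. T \<in> tensor_carrier l l \<and> tensor_rank l l T \<le> 1
                 \<and> tensor_diagonalizable l l (tensor_minus (1\<^sub>m l, A) T))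
            \<and> tensor_rank l l (1\<^sub>m l, A) \<le> l + 1)"
  using main_generic[where 'a = real] main_generic[where 'a = complex] by blast

end
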